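(* Let $f_A(x)=1-\dfrac{1}{\sum_{n\ge0}n!\,x^n}$. For all $n\ge1$ and $k\ge0$, the number of permutations $w\in\mathfrak S_n$ with $|C(w)|=k$ equals the coefficient of $x^nt^k$ in $\dfrac{f_A(x)}{1-t\,f_A(x)}$.
   Context: $\mathfrak S_n$ is the Coxeter group with generators $\tau_i=(i,i+1)$, $1\le i\le n-1$. For $w\in\mathfrak S_n$, $C(w)$ is the set of $\tau_i$ that do not appear in a (any) reduced expression of $w$; equivalently $C(w)=\{\tau_i: w(j)<w(k)\text{ for all }1\le j\le i<k\le n\}$. Generating functions are formal power series. *)

theory Defs
  imports "HOL-Combinatorics.Permutations" "HOL-Computational_Algebra.Formal_Power_Series"
begin

text \<open>The set C(w) for w in S_n (permutation of {1..n}); the generator tau_i = (i,i+1)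
  is identified with its index i.\<close>
definition Cset :: "nat \<Rightarrow> (nat \<Rightarrow> nat) \<Rightarrow> nat set" where
  "Cset n w = {i \<in> {1..n-1}. \<forall>j k. 1 \<le> j \<and> j \<le> i \<and> i < k \<and> k \<le> n \<longrightarrow> w j < w k}"

definition fA :: "rat fps" where
  "fA = 1 - inverse (Abs_fps (\<lambda>n. of_nat (fact n)))"

text \<open>The bivariate series f_A(x) / (1 - t f_A(x)), represented as a power series in t
  whose coefficients are power series in x; the coefficient of x^n t^k is (GA $ k) $ n.\<close>
definition GA :: "rat fps fps" where
  "GA = fps_const fA * inverse (1 - fps_X * fps_const fA)"

end

theory Submission imports Defs 
begin

unbundle fps_syntax


definition Phi :: "nat \<Rightarrow> (nat \<Rightarrow> nat) \<Rightarrow> (nat \<Rightarrow> nat) \<Rightarrow> nat \<Rightarrow> nat" where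
  "Phi i u v = (\<lambda>j. if j \<le> i then u j else v (j - i) + i)"

lemma shift_permutes:
  fixes v :: "nat \<Rightarrow> nat" and i m :: nat
  assumes v: "v permutes {1..m}"
  shows "(\<lambda>j. if j \<le> i then j else v (j - i) + i) permutes {i+1..i+m}"
proof (rule bij_imp_permutes)
  have b1: "bij_betw (\<lambda>j. j - i) {i+1..i+m} {1..m}"
    by (rule bij_betwI[where g="\<lambda>j. j + i"]) auto
  have b3: "bij_betw (\<lambda>j. j + i) {1..m} {i+1..i+m}"
    by (rule bij_betwI[where g="\<lambda>j. j - i"]) auto
  have "bij_betw ((\<lambda>j. j + i) \<circ> v \<circ> (\<lambda>j. j - i)) {i+1..i+m} {i+1..i+m}"
    using b1 permutes_imp_bij[OF v] b3 by (intro bij_betw_trans) auto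
  then show "bij_betw (\<lambda>j. if j \<le> i then j else v (j - i) + i) {i+1..i+m} {i+1..i+m}"
    by (rule bij_betw_cong[THEN iffD1, rotated]) auto
next
  fix x assume "x \<notin> {i+1..i+m}"
  then show "(if x \<le> i then x else v (x - i) + i) = x"
  proof (cases "x \<le> i")
    case False
    then have "x - i \<notin> {1..m}" using \<open>x \<notin> {i+1..i+m}\<close> by auto
    then show ?thesis using permutes_not_in[OF v] False by auto
  qed auto
qed

lemma Phi_comp:
  assumes u: "u permutes {1..i}"
  shows "Phi i u v = (\<lambda>j. if j \<le> i then j else v (j - i) + i) \<circ> u"
proof
  fix j
  show "Phi i u v j = ((\<lambda>j. if j \<le> i then j else v (j - i) + i) \<circ> u) j"
  proof (cases "j \<in> {1..i}")
    case True
    then have "u j \<in> {1..i}" using permutes_in_image[OF u] by auto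
    then show ?thesis using True by (auto simp: Phi_def)
  next
    case False
    then have "u j = j" using permutes_not_in[OF u] by auto
    then show ?thesis using False by (auto simp: Phi_def)
  qed
qed

lemma Phi_permutes:
  assumes u: "u permutes {1..i}" and v: "v permutes {1..m}"
  shows "Phi i u v permutes {1..i+m}"
proof -
  have "u permutes {1..i+m}" by (rule permutes_subset[OF u]) auto
  moreover have "(\<lambda>j. if j \<le> i then j else v (j - i) + i) permutes {1..i+m}"
    by (rule permutes_subset[OF shift_permutes[OF v]]) auto
  ultimately show ?thesis unfolding Phi_comp[OF u] by (rule permutes_compose)
qed

lemma Cset_Phi:
  fixes u v :: "nat \<Rightarrow> nat" and i m :: nat
  assumes u: "u permutes {1..i}" and v: "v permutes {1..m}"
  shows "Cset (i+m) (Phi i u v) = Cset i u \<union> ({i} \<inter> {1..i+m-1}) \<union> ((+) i ` Cset m v)"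
proof -
  let ?w = "Phi i u v"
  have wl: "?w a = u a \<and> u a \<in> {1..i}" if "a \<in> {1..i}" for a
    using that permutes_in_image[OF u] by (auto simp: Phi_def)
  have wr: "?w b = v (b - i) + i \<and> v (b - i) \<in> {1..m}" if "b \<in> {i+1..i+m}" for b
    using that permutes_in_image[OF v, of "b - i"] by (auto simp: Phi_def)
  show ?thesis
  proof (rule set_eqI)
    fix x
    consider "x < i" | "x = i" | "x > i" by linarith
    then show "x \<in> Cset (i+m) ?w \<longleftrightarrow> x \<in> Cset i u \<union> ({i} \<inter> {1..i+m-1}) \<union> ((+) i ` Cset m v)"
    proof cases
      case 1
      have "x \<in> Cset (i+m) ?w \<longleftrightarrow> x \<in> Cset i u"
      proof
        assume A: "x \<in> Cset (i+m) ?w"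
        show "x \<in> Cset i u" unfolding Cset_def
        proof (intro CollectI conjI allI impI)
          show "x \<in> {1..i-1}" using A 1 by (auto simp: Cset_def)
          fix j k assume "1 \<le> j \<and> j \<le> x \<and> x < k \<and> k \<le> i"
          then show "u j < u k" using A wl[of j] wl[of k] 1 unfolding Cset_def by force
        qed
      next
        assume A: "x \<in> Cset i u"
        show "x \<in> Cset (i+m) ?w" unfolding Cset_def
        proof (intro CollectI conjI allI impI)
          show "x \<in> {1..i+m-1}" using A 1 by (auto simp: Cset_def)
          fix j k assume jk: "1 \<le> j \<and> j \<le> x \<and> x < k \<and> k \<le> i + m"
          show "?w j < ?w k"
          proof (cases "k \<le> i")
            case True
            then show ?thesis using A wl[of j] wl[of k] jk unfolding Cset_def by force
          next
            case False
            then show ?thesis using wl[of j] wr[of k] jk 1 by auto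
          qed
        qed
      qed
      then show ?thesis using 1 by auto
    next
      case 2
      have "x \<in> Cset (i+m) ?w \<longleftrightarrow> x \<in> {1..i+m-1}"
      proof -
        have "?w j < ?w k" if "1 \<le> j \<and> j \<le> x \<and> x < k \<and> k \<le> i + m" for j k
          using wl[of j] wr[of k] that 2 by auto
        then show ?thesis unfolding Cset_def by auto
      qed
      moreover have "x \<notin> Cset i u" using 2 by (auto simp: Cset_def)
      moreover have "x \<notin> (+) i ` Cset m v" using 2 by (auto simp: Cset_def)
      ultimately show ?thesis using 2 by auto
    next
      case 3
      have "x \<in> Cset (i+m) ?w \<longleftrightarrow> x - i \<in> Cset m v"
      proof
        assume A: "x \<in> Cset (i+m) ?w"
        show "x - i \<in> Cset m v" unfolding Cset_def
        proof (intro CollectI conjI allI impI)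
          show "x - i \<in> {1..m-1}" using A 3 by (auto simp: Cset_def)
          fix j k assume jk: "1 \<le> j \<and> j \<le> x - i \<and> x - i < k \<and> k \<le> m"
          have B: "\<forall>j k. 1 \<le> j \<and> j \<le> x \<and> x < k \<and> k \<le> i+m \<longrightarrow> ?w j < ?w k"
            using A by (simp add: Cset_def)
          have "1 \<le> j+i \<and> j+i \<le> x \<and> x < k+i \<and> k+i \<le> i+m" using jk 3 by linarith
          then have "?w (j+i) < ?w (k+i)" using B by blast
          then show "v j < v k" using wr[of "j+i"] wr[of "k+i"] jk by auto
        qed
      next
        assume A: "x - i \<in> Cset m v"
        show "x \<in> Cset (i+m) ?w" unfolding Cset_def
        proof (intro CollectI conjI allI impI)
          show "x \<in> {1..i+m-1}" using A 3 by (auto simp: Cset_def)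
          fix j k assume jk: "1 \<le> j \<and> j \<le> x \<and> x < k \<and> k \<le> i + m"
          show "?w j < ?w k"
          proof (cases "j \<le> i")
            case True
            then show ?thesis using wl[of j] wr[of k] jk 3 by auto
          next
            case False
            have B: "\<forall>j k. 1 \<le> j \<and> j \<le> x - i \<and> x - i < k \<and> k \<le> m \<longrightarrow> v j < v k"
              using A by (simp add: Cset_def)
            have "1 \<le> j-i \<and> j-i \<le> x-i \<and> x-i < k-i \<and> k-i \<le> m" using jk 3 False by linarith
            then have "v (j - i) < v (k - i)" using B by blast
            then show ?thesis using wr[of j] wr[of k] jk False by auto
          qed
        qed
      qed
      moreover have "x \<notin> Cset i u" using 3 by (auto simp: Cset_def)
      moreover have "x \<in> (+) i ` Cset m v \<longleftrightarrow> x - i \<in> Cset m v"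
        using 3 by (auto simp: image_iff intro!: bexI[of _ "x - i"])
      ultimately show ?thesis using 3 by auto
    qed
  qed
qed


lemma Phi_inj:
  fixes u v u' v' :: "nat \<Rightarrow> nat" and i m :: nat
  assumes u: "u permutes {1..i}" and v: "v permutes {1..m}"
    and u': "u' permutes {1..i}" and v': "v' permutes {1..m}"
    and eq: "Phi i u v = Phi i u' v'"
  shows "u = u' \<and> v = v'"
proof
  show "u = u'"
  proof
    fix j show "u j = u' j"
    proof (cases "j \<le> i")
      case True then show ?thesis using fun_cong[OF eq, of j] by (simp add: Phi_def)
    next
      case False then show ?thesis using permutes_not_in[OF u, of j] permutes_not_in[OF u', of j] by auto
    qed
  qed
  show "v = v'"
  proof
    fix j show "v j = v' j"
    proof (cases "j = 0")
      case True then show ?thesis using permutes_not_in[OF v, of j] permutes_not_in[OF v', of j] by auto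
    next
      case False then show ?thesis using fun_cong[OF eq, of "j+i"] by (simp add: Phi_def)
    qed
  qed
qed

lemma Phi_decomp:
  fixes w :: "nat \<Rightarrow> nat" and i n :: nat
  assumes w: "w permutes {1..n}" and i: "1 \<le> i" "i \<le> n" and c: "i \<in> Cset n w \<or> i = n"
  shows "\<exists>u v. u permutes {1..i} \<and> v permutes {1..n-i} \<and> w = Phi i u v"
proof -
  have inj: "inj_on w S" for S using permutes_inj[OF w] by (auto intro: inj_on_subset)
  have into: "w j \<in> {1..n}" if "j \<in> {1..n}" for j using permutes_in_image[OF w] that by auto
  have L: "w j \<in> {1..i}" if j: "j \<in> {1..i}" for j
  proof (cases "i = n")
    case True then show ?thesis using into j by auto
  next
    case False
    then have ic: "i \<in> Cset n w" using c by auto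
    then have lt: "w a < w b" if "1 \<le> a" "a \<le> i" "i < b" "b \<le> n" for a b
      using that unfolding Cset_def by auto
    show ?thesis
    proof (rule ccontr)
      assume "w j \<notin> {1..i}"
      then have wj: "w j > i" using into[of j] j i by auto
      have "w ` {i+1..n} \<subseteq> {w j + 1..n}"
        using lt[of j] into j by (auto simp: Suc_le_eq)
      then have "card (w ` {i+1..n}) \<le> card {w j + 1..n}" by (intro card_mono) auto
      moreover have "card (w ` {i+1..n}) = n - i" using card_image[OF inj] by simp
      moreover have "w j \<le> n" using into[of j] j i by simp
      ultimately show False using wj by simp
    qed
  qed
  have imL: "w ` {1..i} = {1..i}" by (rule endo_inj_surj) (use L inj in auto)
  have R: "w j \<in> {i+1..n}" if j: "j \<in> {i+1..n}" for j
  proof (rule ccontr)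
    assume "w j \<notin> {i+1..n}"
    moreover have "j \<in> {1..n}" using j i(1) by simp
    ultimately have "w j \<in> {1..i}" using into[of j] by fastforce
    then obtain j' where "j' \<in> {1..i}" "w j' = w j" using imL by (metis imageE)
    moreover have "j' \<noteq> j" using \<open>j' \<in> {1..i}\<close> j by simp
    ultimately show False using permutes_inj[OF w] by (metis injD)
  qed
  have imR: "w ` {i+1..n} = {i+1..n}" by (rule endo_inj_surj) (use R inj in auto)
  define u where "u = (\<lambda>j. if j \<le> i then w j else j)"
  define v where "v = (\<lambda>j. if 1 \<le> j \<and> j \<le> n - i then w (j + i) - i else j)"
  have "u permutes {1..i}"
  proof (rule bij_imp_permutes)
    have "bij_betw w {1..i} {1..i}" using imL inj by (auto simp: bij_betw_def)
    then show "bij_betw u {1..i} {1..i}"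
      by (rule bij_betw_cong[THEN iffD1, rotated]) (auto simp: u_def)
  next
    fix x assume "x \<notin> {1..i}"
    then show "u x = x" using permutes_not_in[OF w, of 0] by (cases "x = 0") (auto simp: u_def)
  qed
  moreover have "v permutes {1..n-i}"
  proof (rule bij_imp_permutes)
    have b1: "bij_betw (\<lambda>j. j + i) {1..n-i} {i+1..n}"
      by (rule bij_betwI[where g="\<lambda>j. j - i"]) (use i in auto)
    have b3: "bij_betw (\<lambda>j. j - i) {i+1..n} {1..n-i}"
      by (rule bij_betwI[where g="\<lambda>j. j + i"]) (use i in auto)
    have b2: "bij_betw w {i+1..n} {i+1..n}" using imR inj by (auto simp: bij_betw_def)
    have "bij_betw ((\<lambda>j. j - i) \<circ> w \<circ> (\<lambda>j. j + i)) {1..n-i} {1..n-i}"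
      using b1 b2 b3 by (intro bij_betw_trans) auto
    then show "bij_betw v {1..n-i} {1..n-i}"
      by (rule bij_betw_cong[THEN iffD1, rotated]) (auto simp: v_def)
  next
    fix x assume "x \<notin> {1..n-i}"
    then show "v x = x" by (auto simp: v_def)
  qed
  moreover have "w = Phi i u v"
  proof
    fix j
    show "w j = Phi i u v j"
    proof (cases "j \<le> i")
      case True then show ?thesis by (simp add: Phi_def u_def)
    next
      case False
      show ?thesis
      proof (cases "j \<le> n")
        case True
        then have "w j \<in> {i+1..n}" using R False by auto
        then show ?thesis using False True by (auto simp: Phi_def v_def)
      next
        case False2: False
        then have "w j = j" using permutes_not_in[OF w] by auto
        then show ?thesis using False False2 by (auto simp: Phi_def v_def)
      qed
    qed
  qed
  ultimately show ?thesis by blast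
qed


definition Ind :: "nat \<Rightarrow> (nat \<Rightarrow> nat) set" where
  "Ind i = {u. u permutes {1..i} \<and> Cset i u = {}}"

lemma finite_Cset: "finite (Cset n w)"
  by (rule finite_subset[of _ "{1..n-1}"]) (auto simp: Cset_def)

lemma Cset_sub: "Cset n w \<subseteq> {1..n-1}"
  by (auto simp: Cset_def)

lemma Cset_Phi_Ind:
  fixes u v :: "nat \<Rightarrow> nat" and i m :: nat
  assumes u: "u \<in> Ind i" and v: "v permutes {1..m}" and i: "1 \<le> i"
  shows "Cset (i+m) (Phi i u v) = (if 0 < m then {i} else {}) \<union> ((+) i ` Cset m v)"
  using Cset_Phi[of u i v m] u v i by (auto simp: Ind_def)

lemma card_Cset_Phi:
  fixes u v :: "nat \<Rightarrow> nat" and i m :: nat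
  assumes u: "u \<in> Ind i" and v: "v permutes {1..m}" and i: "1 \<le> i"
  shows "card (Cset (i+m) (Phi i u v)) = (if 0 < m then 1 else 0) + card (Cset m v)"
proof -
  have ci: "card ((+) i ` Cset m v) = card (Cset m v)" by (rule card_image) auto
  have "i \<notin> (+) i ` Cset m v" using Cset_sub[of m v] by auto
  then show ?thesis unfolding Cset_Phi_Ind[OF u v i]
    using ci finite_Cset[of m v] by auto
qed

lemma Phi_disj:
  fixes u v u' v' :: "nat \<Rightarrow> nat" and i j n :: nat
  assumes "1 \<le> i" "i < j" "j \<le> n" and u: "u \<in> Ind i" and v: "v permutes {1..n-i}"
    and u': "u' \<in> Ind j" and v': "v' permutes {1..n-j}"
  shows "Phi i u v \<noteq> Phi j u' v'"
proof
  assume eq: "Phi i u v = Phi j u' v'"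
  have n1: "i + (n - i) = n" "j + (n - j) = n" using assms by auto
  have "i \<in> Cset n (Phi i u v)" using Cset_Phi_Ind[OF u v] n1 assms by auto
  moreover have "\<forall>x \<in> Cset n (Phi j u' v'). j \<le> x" using Cset_Phi_Ind[OF u' v'] n1 assms by auto
  ultimately show False using eq assms by auto
qed

lemma count_lemma:
  fixes n :: nat and Q :: "nat \<Rightarrow> bool"
  assumes n: "1 \<le> n"
  shows "card {w. w permutes {1..n} \<and> Q (card (Cset n w))} =
    (\<Sum>i=1..n. card (Ind i) * card {v. v permutes {1..n-i} \<and> Q ((if i < n then 1 else 0) + card (Cset (n-i) v))})"
proof -
  define V where "V i = {v. v permutes {1..n-i} \<and> Q ((if i < n then 1 else 0) + card (Cset (n-i) v))}" for i
  define P where "P i = (\<lambda>(u,v). Phi i u v) ` (Ind i \<times> V i)" for i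
  have eqset: "{w. w permutes {1..n} \<and> Q (card (Cset n w))} = (\<Union>i\<in>{1..n}. P i)"
  proof (rule set_eqI, rule iffI)
    fix w assume "w \<in> {w. w permutes {1..n} \<and> Q (card (Cset n w))}"
    then have w: "w permutes {1..n}" and q: "Q (card (Cset n w))" by auto
    define i where "i = Min (Cset n w \<union> {n})"
    have fin: "finite (Cset n w \<union> {n})" using finite_Cset by auto
    have iin: "i \<in> Cset n w \<union> {n}" unfolding i_def by (rule Min_in[OF fin]) auto
    have imin: "i \<le> x" if "x \<in> Cset n w" for x unfolding i_def using fin that by auto
    have i1: "1 \<le> i" "i \<le> n" using iin Cset_sub[of n w] n by (auto dest!: subsetD)
    obtain u v where u: "u permutes {1..i}" and v: "v permutes {1..n-i}" and wuv: "w = Phi i u v"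
      using Phi_decomp[OF w i1] iin by blast
    have n1: "i + (n - i) = n" using i1 by simp
    have "Cset i u = {}"
    proof (rule ccontr)
      assume "Cset i u \<noteq> {}"
      then obtain x where x: "x \<in> Cset i u" by auto
      then have "x \<in> Cset n w" using Cset_Phi[OF u v] wuv n1 by auto
      moreover have "x < i" using x Cset_sub[of i u] by (auto dest!: subsetD)
      ultimately show False using imin by fastforce
    qed
    then have uI: "u \<in> Ind i" using u by (simp add: Ind_def)
    have "card (Cset n w) = (if i < n then 1 else 0) + card (Cset (n-i) v)"
      using card_Cset_Phi[OF uI v i1(1)] wuv n1 i1 by auto
    then have "v \<in> V i" using v q by (simp add: V_def)
    then have "w \<in> P i" using uI wuv by (auto simp: P_def)
    then show "w \<in> (\<Union>i\<in>{1..n}. P i)" using i1 by auto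
  next
    fix w assume "w \<in> (\<Union>i\<in>{1..n}. P i)"
    then obtain i u v where i1: "1 \<le> i" "i \<le> n" and uI: "u \<in> Ind i" and vV: "v \<in> V i"
      and wuv: "w = Phi i u v" by (auto simp: P_def)
    have n1: "i + (n - i) = n" using i1 by simp
    have u: "u permutes {1..i}" using uI by (simp add: Ind_def)
    have v: "v permutes {1..n-i}" using vV by (simp add: V_def)
    have "w permutes {1..n}" using Phi_permutes[OF u v] wuv n1 by simp
    moreover have "card (Cset n w) = (if i < n then 1 else 0) + card (Cset (n-i) v)"
      using card_Cset_Phi[OF uI v i1(1)] wuv n1 i1 by auto
    ultimately show "w \<in> {w. w permutes {1..n} \<and> Q (card (Cset n w))}" using vV by (simp add: V_def)
  qed
  have finP: "finite (P i)" for i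
  proof -
    have "finite (Ind i)" unfolding Ind_def
      by (rule finite_subset[OF _ finite_permutations[of "{1..i}"]]) auto
    moreover have "finite (V i)" unfolding V_def
      by (rule finite_subset[OF _ finite_permutations[of "{1..n-i}"]]) auto
    ultimately show ?thesis unfolding P_def by auto
  qed
  have disj: "P i \<inter> P j = {}" if "i \<in> {1..n}" "j \<in> {1..n}" "i \<noteq> j" for i j
  proof -
    have "Phi i u v \<noteq> Phi j u' v'" if "u \<in> Ind i" "v \<in> V i" "u' \<in> Ind j" "v' \<in> V j" for u v u' v'
    proof (cases "i < j")
      case True then show ?thesis using Phi_disj[of i j n u v u' v'] that \<open>i \<in> {1..n}\<close> \<open>j \<in> {1..n}\<close>
        by (auto simp: V_def)
    next
      case False then have "j < i" using \<open>i \<noteq> j\<close> by simp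
      then show ?thesis using Phi_disj[of j i n u' v' u v] that \<open>i \<in> {1..n}\<close> \<open>j \<in> {1..n}\<close>
        by (auto simp: V_def)
    qed
    then show ?thesis unfolding P_def by fastforce
  qed
  have cardP: "card (P i) = card (Ind i) * card (V i)" for i
  proof -
    have "inj_on (\<lambda>(u,v). Phi i u v) (Ind i \<times> V i)"
    proof (rule inj_onI, clarify)
      fix u v u' v' assume "u \<in> Ind i" "v \<in> V i" "u' \<in> Ind i" "v' \<in> V i" "Phi i u v = Phi i u' v'"
      then show "u = u' \<and> v = v'" using Phi_inj[of u i v "n-i" u' v'] by (auto simp: Ind_def V_def)
    qed
    then show ?thesis unfolding P_def by (simp add: card_image card_cartesian_product)
  qed
  have "card (\<Union>i\<in>{1..n}. P i) = (\<Sum>i=1..n. card (P i))"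
    by (rule card_UN_disjoint) (use finP disj in auto)
  then show ?thesis unfolding eqset cardP V_def by simp
qed


definition acount :: "nat \<Rightarrow> nat \<Rightarrow> nat" where
  "acount n k = card {w. w permutes {1..n} \<and> card (Cset n w) = k}"

lemma RF:
  assumes "1 \<le> n"
  shows "fact n = (\<Sum>i=1..n. card (Ind i) * fact (n - i))"
  using count_lemma[OF assms, of "\<lambda>_. True"] card_permutations[of "{1..n}" n]
    card_permutations[of "{1..n-_}"] by simp

lemma R0: "acount n 0 = card (Ind n)"
proof -
  have "{w. w permutes {1..n} \<and> card (Cset n w) = 0} = Ind n"
    using finite_Cset by (auto simp: Ind_def)
  then show ?thesis by (simp add: acount_def)
qed

lemma Rk:
  assumes "1 \<le> n"
  shows "acount n (Suc k) = (\<Sum>i=1..n. card (Ind i) * (if i < n then acount (n - i) k else 0))"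
proof -
  have "acount n (Suc k) = (\<Sum>i=1..n. card (Ind i) * card {v. v permutes {1..n-i} \<and> (if i < n then 1 else 0) + card (Cset (n-i) v) = Suc k})"
    unfolding acount_def by (rule count_lemma[OF assms])
  also have "\<dots> = (\<Sum>i=1..n. card (Ind i) * (if i < n then acount (n - i) k else 0))"
  proof (rule sum.cong[OF refl])
    fix i assume i: "i \<in> {1..n}"
    show "card (Ind i) * card {v. v permutes {1..n-i} \<and> (if i < n then 1 else 0) + card (Cset (n-i) v) = Suc k}
      = card (Ind i) * (if i < n then acount (n - i) k else 0)"
    proof (cases "i < n")
      case True then show ?thesis by (simp add: acount_def)
    next
      case False
      then have "n - i = 0" by simp
      then have "Cset (n-i) v = {}" for v by (simp add: Cset_def)
      then show ?thesis using False by simp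
    qed
  qed
  finally show ?thesis .
qed

definition Dser :: "rat fps" where
  "Dser = Abs_fps (\<lambda>n. if n = 0 then 0 else of_nat (card (Ind n)))"

lemma fA_eq: "fA = Dser"
proof -
  define F :: "rat fps" where "F = Abs_fps (\<lambda>n. of_nat (fact n))"
  have DF: "Dser * F = F - 1"
  proof (rule fps_ext)
    fix n
    show "(Dser * F) $ n = (F - 1) $ n"
    proof (cases "n = 0")
      case True then show ?thesis by (simp add: fps_mult_nth Dser_def F_def)
    next
      case False
      have "(Dser * F) $ n = (\<Sum>i=0..n. Dser $ i * F $ (n - i))" by (rule fps_mult_nth)
      also have "\<dots> = (\<Sum>i=Suc 0..n. Dser $ i * F $ (n - i))"
        by (subst sum.atLeast_Suc_atMost) (auto simp: Dser_def)
      also have "\<dots> = (\<Sum>i=1..n. of_nat (card (Ind i) * fact (n - i)))"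
        by (rule sum.cong) (auto simp: Dser_def F_def)
      also have "\<dots> = of_nat (\<Sum>i=1..n. card (Ind i) * fact (n - i))" by simp
      also have "\<dots> = of_nat (fact n)" using RF[of n] False by simp
      finally show ?thesis using False by (simp add: F_def)
    qed
  qed
  have "F * (1 - Dser) = 1" using DF by (simp add: algebra_simps)
  then have "inverse F = 1 - Dser" by (rule fps_inverse_unique)
  then show ?thesis unfolding fA_def F_def[symmetric] by simp
qed

lemma GA_nth: "fps_nth GA k = fA ^ Suc k"
proof -
  define c where "c = fA"
  define G :: "rat fps fps" where "G = Abs_fps (\<lambda>k. c ^ k)"
  define f :: "rat fps fps" where "f = 1 - fps_X * fps_const c"
  have fG: "f * G = 1"
  proof (rule fps_ext)
    fix n
    show "(f * G) $ n = 1 $ n"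
    proof (cases n)
      case 0 then show ?thesis by (simp add: f_def G_def algebra_simps)
    next
      case (Suc m)
      have "f * G = G - fps_X * (fps_const c * G)" by (simp add: f_def algebra_simps)
      then show ?thesis using Suc by (simp add: G_def)
    qed
  qed
  have f0: "f $ 0 = 1" by (simp add: f_def)
  have G0: "G $ 0 = 1" by (simp add: G_def)
  have iv: "inverse (f $ 0) = G $ 0" by (simp add: f0 G0)
  have "inverse f = fps_right_inverse f (G $ 0)"
    by (subst fps_inverse_def) (simp only: iv)
  also have "\<dots> = G" using fps_lr_inverse_unique_ring1(2)[OF fG] f0 G0 by simp
  finally have "inverse f = G" .
  then have GA: "GA = fps_const c * G" unfolding GA_def c_def f_def by simp
  have "GA $ k = c * c ^ k" unfolding GA fps_mult_left_const_nth by (simp add: G_def)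
  then show ?thesis by (simp add: c_def)
qed

lemma D_power:
  assumes "1 \<le> n"
  shows "(Dser ^ Suc k) $ n = of_nat (acount n k)"
  using assms
proof (induction k arbitrary: n)
  case 0
  then show ?case by (simp add: Dser_def R0)
next
  case (Suc k)
  let ?E = "Dser ^ Suc k"
  have E0: "?E $ 0 = 0" by (simp add: fps_power_zeroth Dser_def)
  have "(Dser ^ Suc (Suc k)) $ n = (Dser * ?E) $ n" by simp
  also have "\<dots> = (\<Sum>i=0..n. Dser $ i * ?E $ (n - i))" by (rule fps_mult_nth)
  also have "\<dots> = (\<Sum>i=Suc 0..n. Dser $ i * ?E $ (n - i))"
    by (subst sum.atLeast_Suc_atMost) (auto simp: Dser_def)
  also have "\<dots> = (\<Sum>i=1..n. of_nat (card (Ind i) * (if i < n then acount (n - i) k else 0)))"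
  proof (rule sum.cong)
    fix i assume i: "i \<in> {1..n}"
    show "Dser $ i * ?E $ (n - i) = of_nat (card (Ind i) * (if i < n then acount (n - i) k else 0))"
    proof (cases "i < n")
      case True then show ?thesis using Suc.IH[of "n - i"] i by (simp add: Dser_def)
    next
      case False then have "n - i = 0" by simp
      then show ?thesis using E0 False by simp
    qed
  qed simp
  also have "\<dots> = of_nat (acount n (Suc k))" using Rk[OF Suc.prems, of k] by simp
  finally show ?case .
qed

theorem mainTheorem14:
  fixes n k :: nat
  assumes "n \<ge> 1"
  shows "of_nat (card {w. w permutes {1..n} \<and> card (Cset n w) = k}) = fps_nth (fps_nth GA k) n"
  using D_power[OF assms, of k] unfolding GA_nth fA_eq acount_def by simp

end
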